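(* Let $\{\mathcal{F}_\tau\}_{\tau=0}^t$ be a filtration and let $P(1),\ldots,P(t)\in\mathbb{R}^{d\times d}$ be symmetric random matrices with $P(\tau)$ $\mathcal{F}_\tau$-measurable. Suppose that for each $\tau=1,\ldots,t$, $\|P(\tau)\|_F\le c$ for some $c>0$ and $\lambda_{\min}(\mathbb{E}[P(\tau)\mid\mathcal{F}_{\tau-1}])\ge\phi^2>0$ almost surely. For any given $\delta\in(0,1)$, let $\lambda_t\ge4\sqrt2c\sqrt t\sqrt{\log\frac{4t^2}{\delta}}$. Then with probability at least $1-\delta/t^2$, $$\lambda_{\min}\Big(\sum_{\tau=1}^tP(\tau)+\lambda_tI\Big)\ge\phi^2t.$$
   Context: $\|A\|_F$ denotes the Frobenius norm of a matrix $A$ and $\lambda_{\min}$ the minimum eigenvalue of a symmetric matrix. *)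

theory Defs
  imports "HOL-Analysis.Analysis" "HOL-Probability.Probability"
begin

definition frob_norm :: "real^'d^'d \<Rightarrow> real" where
  "frob_norm A = sqrt (\<Sum>i\<in>UNIV. \<Sum>j\<in>UNIV. (A $ i $ j)^2)"

definition eigenvalues_real :: "real^'d^'d \<Rightarrow> real set" where
  "eigenvalues_real A = {l. \<exists>v. v \<noteq> 0 \<and> A *v v = l *\<^sub>R v}"

definition lambda_min :: "real^'d^'d \<Rightarrow> real" where
  "lambda_min A = Min (eigenvalues_real A)"

definition mat_cond_exp :: "'a measure \<Rightarrow> 'a measure \<Rightarrow> ('a \<Rightarrow> real^'d^'d) \<Rightarrow> 'a \<Rightarrow> real^'d^'d" where
  "mat_cond_exp M F X = (\<lambda>\<omega>. \<chi> i j. real_cond_exp M F (\<lambda>x. X x $ i $ j) \<omega>)"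

end

theory Submission imports Defs begin

lemma sym_inner:
  fixes A :: "real^'n^'n"
  assumes "transpose A = A"
  shows "(A *v x) \<bullet> y = x \<bullet> (A *v y)"
proof -
  have "(A *v x) \<bullet> y = (x v* A) \<bullet> y"
    by (metis assms transpose_matrix_vector)
  also have "\<dots> = x \<bullet> (A *v y)" by (rule dot_lmul_matrix)
  finally show ?thesis .
qed

lemma eig_finite:
  fixes A :: "real^'n^'n"
  assumes "transpose A = A"
  shows "finite (eigenvalues_real A)"
proof -
  define E where "E = eigenvalues_real A"
  have "\<forall>l\<in>E. \<exists>v. v \<noteq> 0 \<and> A *v v = l *\<^sub>R v" unfolding E_def eigenvalues_real_def by auto
  then obtain vv where vv: "\<And>l. l \<in> E \<Longrightarrow> vv l \<noteq> 0 \<and> A *v vv l = l *\<^sub>R vv l" by metis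
  have inj: "inj_on vv E"
  proof (rule inj_onI)
    fix l1 l2 assume "l1 \<in> E" "l2 \<in> E" "vv l1 = vv l2"
    then have "l1 *\<^sub>R vv l1 = l2 *\<^sub>R vv l1" using vv by metis
    then show "l1 = l2" using vv \<open>l1 \<in> E\<close> by (metis scaleR_cancel_right)
  qed
  have orth: "pairwise orthogonal (vv ` E)"
  proof (clarsimp simp: pairwise_def)
    fix l1 l2 assume h: "l1 \<in> E" "l2 \<in> E" "vv l1 \<noteq> vv l2"
    then have "l1 \<noteq> l2" by auto
    have "(A *v vv l1) \<bullet> vv l2 = vv l1 \<bullet> (A *v vv l2)" by (rule sym_inner[OF assms])
    then have "l1 * (vv l1 \<bullet> vv l2) = l2 * (vv l1 \<bullet> vv l2)" using vv h by simp
    then show "orthogonal (vv l1) (vv l2)" using \<open>l1 \<noteq> l2\<close> unfolding orthogonal_def by simp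
  qed
  have "0 \<notin> vv ` E" using vv by auto
  then have "independent (vv ` E)" using pairwise_orthogonal_independent orth by blast
  then have "finite (vv ` E)" using independent_imp_finite by blast
  then show ?thesis using inj finite_imageD unfolding E_def by blast
qed


lemma quad_expand:
  fixes A :: "real^'n^'n"
  assumes "transpose A = A"
  shows "(u + s *\<^sub>R w) \<bullet> (A *v (u + s *\<^sub>R w)) = u \<bullet> (A *v u) + 2 * s * (w \<bullet> (A *v u)) + s^2 * (w \<bullet> (A *v w))"
proof -
  have "u \<bullet> (A *v w) = w \<bullet> (A *v u)" using sym_inner[OF assms, of w u] by (simp add: inner_commute)
  then show ?thesis
    by (simp add: matrix_vector_right_distrib matrix_vector_mult_scaleR inner_add_left inner_add_right power2_eq_square algebra_simps)
qed

lemma lin_zero: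
  fixes a K :: real
  assumes "\<And>s. 0 \<le> 2 * s * a + s^2 * K"
  shows "a = 0"
proof (rule ccontr)
  assume "a \<noteq> 0"
  define K' where "K' = max K 0 + 1"
  have K': "K' > 0" "K \<le> K'" unfolding K'_def by auto
  define s where "s = - a / K'"
  have "0 \<le> 2 * s * a + s^2 * K" by (rule assms)
  also have "\<dots> \<le> 2 * s * a + s^2 * K'" using K' by (simp add: mult_left_mono)
  also have "\<dots> = - (a^2) / K'" using K' unfolding s_def by (simp add: field_simps power2_eq_square)
  also have "\<dots> < 0" using \<open>a \<noteq> 0\<close> K' by simp
  finally show False by simp
qed

lemma sym_min_eig:
  fixes A :: "real^'n^'n"
  assumes sym: "transpose A = A"
  shows "\<exists>m. m \<in> eigenvalues_real A \<and> (\<forall>v. m * (v \<bullet> v) \<le> v \<bullet> (A *v v))"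
proof -
  let ?q = "\<lambda>v. v \<bullet> (A *v v)"
  have ne: "sphere (0::real^'n) 1 \<noteq> {}"
  proof -
    obtain b :: "real^'n" where "b \<in> Basis" using nonempty_Basis by blast
    then have "norm b = 1" by simp
    then show ?thesis by auto
  qed
  have cont: "continuous_on (sphere 0 1) ?q"
    by (rule continuous_on_inner[OF continuous_on_id linear_continuous_on[OF matrix_vector_mul_bounded_linear]])
  obtain u where u: "u \<in> sphere 0 1" and umin: "\<And>y. y \<in> sphere 0 1 \<Longrightarrow> ?q u \<le> ?q y"
    using continuous_attains_inf[OF compact_sphere ne cont] by auto
  define m where "m = ?q u"
  have nu: "u \<bullet> u = 1" using u by (simp add: norm_eq_1)
  have ge: "m * (v \<bullet> v) \<le> ?q v" for v
  proof (cases "v = 0")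
    case True then show ?thesis by simp
  next
    case False
    define y where "y = (1 / norm v) *\<^sub>R v"
    have "y \<in> sphere 0 1" using False unfolding y_def by simp
    then have "m \<le> ?q y" unfolding m_def by (rule umin)
    moreover have "?q y = ?q v / (norm v)^2"
      unfolding y_def by (simp add: matrix_vector_mult_scaleR power2_eq_square)
    moreover have "v \<bullet> v = (norm v)^2" by (simp add: power2_norm_eq_inner)
    ultimately show ?thesis using False by (simp add: field_simps)
  qed
  have eig: "A *v u = m *\<^sub>R u"
  proof -
    define w where "w = A *v u - m *\<^sub>R u"
    have "0 \<le> 2 * s * (w \<bullet> (A *v u - m *\<^sub>R u)) + s^2 * (?q w - m * (w \<bullet> w))" for s
    proof -
      have h1: "m * ((u + s *\<^sub>R w) \<bullet> (u + s *\<^sub>R w)) \<le> ?q (u + s *\<^sub>R w)" by (rule ge)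
      have h2: "(u + s *\<^sub>R w) \<bullet> (u + s *\<^sub>R w) = 1 + 2 * s * (w \<bullet> u) + s^2 * (w \<bullet> w)"
        using nu by (simp add: inner_add_left inner_add_right inner_commute power2_eq_square algebra_simps)
      have h3: "m * (1 + 2 * s * (w \<bullet> u) + s^2 * (w \<bullet> w)) = m + 2 * s * (m * (w \<bullet> u)) + s^2 * (m * (w \<bullet> w))"
        by (simp add: algebra_simps)
      have h4: "w \<bullet> (A *v u - m *\<^sub>R u) = w \<bullet> (A *v u) - m * (w \<bullet> u)" by (simp add: inner_diff_right)
      have h5: "2 * s * (w \<bullet> (A *v u) - m * (w \<bullet> u)) + s^2 * (?q w - m * (w \<bullet> w))
          = (m + 2 * s * (w \<bullet> (A *v u)) + s^2 * ?q w) - (m + 2 * s * (m * (w \<bullet> u)) + s^2 * (m * (w \<bullet> w)))"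
        by (simp add: algebra_simps)
      have h6: "m + 2 * s * (m * (w \<bullet> u)) + s^2 * (m * (w \<bullet> w)) \<le> m + 2 * s * (w \<bullet> (A *v u)) + s^2 * ?q w"
        using h1 unfolding h2 h3 quad_expand[OF sym, of u s w] m_def[symmetric] .
      show ?thesis unfolding h4 h5 using h6 by simp
    qed
    then have "w \<bullet> (A *v u - m *\<^sub>R u) = 0" by (rule lin_zero)
    then have "w = 0" unfolding w_def by simp
    then show ?thesis unfolding w_def by simp
  qed
  have "u \<noteq> 0" using u by auto
  then have "m \<in> eigenvalues_real A" unfolding eigenvalues_real_def using eig by auto
  then show ?thesis using ge by blast
qed

lemma lambda_min_char:
  fixes A :: "real^'n^'n"
  assumes sym: "transpose A = A"
  shows "r \<le> lambda_min A \<longleftrightarrow> (\<forall>v. r * (v \<bullet> v) \<le> v \<bullet> (A *v v))"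
proof -
  obtain m where m: "m \<in> eigenvalues_real A" and ge: "\<And>v. m * (v \<bullet> v) \<le> v \<bullet> (A *v v)"
    using sym_min_eig[OF sym] by blast
  have all: "m \<le> l" if "l \<in> eigenvalues_real A" for l
  proof -
    have "\<exists>v. v \<noteq> 0 \<and> A *v v = l *\<^sub>R v" using that by (simp add: eigenvalues_real_def)
    then obtain v where v: "v \<noteq> 0" "A *v v = l *\<^sub>R v" by blast
    have "v \<bullet> (A *v v) = l * (v \<bullet> v)" using v(2) by simp
    then have "m * (v \<bullet> v) \<le> l * (v \<bullet> v)" using ge[of v] by simp
    moreover have "v \<bullet> v > 0" using v by simp
    ultimately show ?thesis by simp
  qed
  have lm: "lambda_min A = m" unfolding lambda_min_def
    by (rule Min_eqI[OF eig_finite[OF sym] all m])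
  show ?thesis
  proof
    assume "r \<le> lambda_min A"
    then have "r \<le> m" using lm by simp
    show "\<forall>v. r * (v \<bullet> v) \<le> v \<bullet> (A *v v)"
    proof
      fix v :: "real^'n"
      have "r * (v \<bullet> v) \<le> m * (v \<bullet> v)" using \<open>r \<le> m\<close> by (simp add: mult_right_mono)
      then show "r * (v \<bullet> v) \<le> v \<bullet> (A *v v)" using ge[of v] by linarith
    qed
  next
    assume h: "\<forall>v. r * (v \<bullet> v) \<le> v \<bullet> (A *v v)"
    have "\<exists>v. v \<noteq> 0 \<and> A *v v = m *\<^sub>R v" using m by (simp add: eigenvalues_real_def)
    then obtain v where v: "v \<noteq> 0" "A *v v = m *\<^sub>R v" by blast
    have "r * (v \<bullet> v) \<le> v \<bullet> (A *v v)" using h by blast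
    moreover have "v \<bullet> (A *v v) = m * (v \<bullet> v)" using v(2) by simp
    ultimately have "r * (v \<bullet> v) \<le> m * (v \<bullet> v)" by simp
    moreover have "v \<bullet> v > 0" using v by simp
    ultimately show "r \<le> lambda_min A" using lm by simp
  qed
qed


lemma inner_mat: "(A::real^'n^'m) \<bullet> B = (\<Sum>i\<in>UNIV. \<Sum>j\<in>UNIV. A$i$j * B$i$j)"
  by (simp add: inner_vec_def)

lemma norm_sq_mat: "(norm (A::real^'n^'m))^2 = (\<Sum>i\<in>UNIV. \<Sum>j\<in>UNIV. (A$i$j)^2)"
proof -
  have "(norm A)^2 = A \<bullet> A" by (simp add: dot_square_norm)
  then show ?thesis unfolding inner_mat by (simp add: power2_eq_square)
qed

lemma frob_norm_eq: "frob_norm A = norm A"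
  unfolding frob_norm_def by (simp add: norm_eq_sqrt_inner inner_mat power2_eq_square)

lemma quad_le:
  fixes S :: "real^'n^'n" and v :: "real^'n"
  shows "\<bar>v \<bullet> (S *v v)\<bar> \<le> norm S * (v \<bullet> v)"
proof -
  define Om where "Om = (\<chi> i j. v$i * v$j :: real^'n^'n)"
  have "v \<bullet> (S *v v) = S \<bullet> Om"
    unfolding Om_def inner_mat by (simp add: inner_vec_def matrix_vector_mult_def sum_distrib_left algebra_simps)
  moreover have "norm Om = v \<bullet> v"
  proof -
    have "(norm Om)^2 = (\<Sum>i\<in>UNIV. \<Sum>j\<in>UNIV. (v$i)^2 * (v$j)^2)"
      unfolding norm_sq_mat Om_def by (simp add: power_mult_distrib)
    also have "\<dots> = (v \<bullet> v)^2"
      by (simp add: inner_vec_def power2_eq_square sum_product algebra_simps)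
    finally show ?thesis by (simp add: power2_eq_iff_nonneg)
  qed
  ultimately show ?thesis using Cauchy_Schwarz_ineq2[of S Om] by simp
qed

lemma vec_meas:
  fixes f :: "'a \<Rightarrow> 'b::euclidean_space^'n"
  assumes "\<And>i. (\<lambda>x. f x $ i) \<in> borel_measurable N"
  shows "f \<in> borel_measurable N"
proof (subst borel_measurable_euclidean_space, intro ballI)
  fix b :: "'b^'n" assume "b \<in> Basis"
  then obtain i u where b: "b = axis i u" "u \<in> Basis" unfolding Basis_vec_def by auto
  have "(\<lambda>x. f x \<bullet> b) = (\<lambda>x. (f x $ i) \<bullet> u)" unfolding b by (simp add: inner_axis)
  moreover have "(\<lambda>x. (f x $ i) \<bullet> u) \<in> borel_measurable N" using assms[of i] by measurable
  ultimately show "(\<lambda>x. f x \<bullet> b) \<in> borel_measurable N" by simp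
qed

lemma mat_meas:
  fixes f :: "'a \<Rightarrow> real^'n^'m"
  assumes "\<And>i j. (\<lambda>x. f x $ i $ j) \<in> borel_measurable N"
  shows "f \<in> borel_measurable N"
  by (rule vec_meas, rule vec_meas, rule assms)

lemma closed_psd:
  "closed {X::real^'n^'n. \<forall>v. r * (v \<bullet> v) \<le> v \<bullet> (X *v v)}"
proof -
  have "{X::real^'n^'n. \<forall>v. r * (v \<bullet> v) \<le> v \<bullet> (X *v v)} = (\<Inter>v. {X. r * (v \<bullet> v) \<le> v \<bullet> (X *v v)})"
    by auto
  moreover have "closed {X::real^'n^'n. r * (v \<bullet> v) \<le> v \<bullet> (X *v v)}" for v :: "real^'n"
  proof -
    have e: "(\<lambda>X::real^'n^'n. v \<bullet> (X *v v)) = (\<lambda>X. \<Sum>i\<in>UNIV. \<Sum>j\<in>UNIV. v$i * (X$i$j * v$j))"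
      by (simp add: inner_vec_def matrix_vector_mult_def sum_distrib_left)
    have "continuous_on UNIV (\<lambda>X::real^'n^'n. v \<bullet> (X *v v))"
      unfolding e by (intro continuous_intros)
    then show ?thesis
      by (intro closed_Collect_le) (auto intro: continuous_intros)
  qed
  ultimately show ?thesis by (auto intro!: closed_INT)
qed

lemma entry_le: "\<bar>(A::real^'n^'m) $ i $ j\<bar> \<le> norm A"
proof -
  have "\<bar>A $ i $ j\<bar> \<le> norm (A $ i)" by (rule component_le_norm_cart)
  also have "norm (A $ i) \<le> norm A"
    unfolding norm_vec_def[of A] by (rule member_le_L2_set) simp_all
  finally show ?thesis .
qed

lemma sq_le: "\<bar>x::real\<bar> \<le> c \<Longrightarrow> x^2 \<le> c^2"
  by (metis abs_ge_zero power2_abs power_mono)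

lemma expb:
  fixes y :: real assumes "\<bar>y\<bar> \<le> 1" shows "exp y \<le> 1 + y + y^2"
proof (cases "y \<ge> 0")
  case True then show ?thesis using assms exp_bound by auto
next
  case False
  define u where "u = - y"
  have u: "0 < u" "u \<le> 1" using False assms unfolding u_def by auto
  have e1: "1 + u + u^2/2 \<le> exp u" using exp_lower_Taylor_quadratic u by auto
  have u2: "u^2 > 0" using u by simp
  have pos: "0 < 1 - u + u^2" using u u2 by linarith
  have id: "(1 + u + u^2/2) * (1 - u + u^2) = 1 + u^2/2 + u^3/2 + u^4/2"
    by (simp add: eval_nat_numeral field_simps)
  have "0 \<le> u^3" "0 \<le> u^4" using u by auto
  then have "1 \<le> (1 + u + u^2/2) * (1 - u + u^2)" unfolding id using u2 by linarith
  also have "\<dots> \<le> exp u * (1 - u + u^2)" using e1 pos by (simp add: mult_right_mono)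
  finally have "1 \<le> exp u * (1 - u + u^2)" .
  then have "exp (-u) \<le> 1 - u + u^2" by (simp add: exp_minus field_simps)
  then show ?thesis unfolding u_def by simp
qed

lemma norm_add_sq: "(norm (s + d::'a::real_inner))^2 = (norm s)^2 + 2 * (s \<bullet> d) + (norm d)^2"
  by (simp add: dot_square_norm[symmetric] inner_add_left inner_add_right inner_commute)

lemma step_pt:
  fixes s d :: "'a::real_inner" and \<alpha> K b :: real
  assumes a: "\<alpha> \<ge> 0" and s: "norm s \<le> K" and d: "norm d \<le> b" and ab: "2 * \<alpha> * K * b \<le> 1"
  shows "exp (\<alpha> * (norm (s + d))^2) \<le> exp (\<alpha> * b^2) * (exp ((\<alpha> + 4 * \<alpha>^2 * b^2) * (norm s)^2) + exp (\<alpha> * (norm s)^2) * (2 * \<alpha> * (s \<bullet> d)))"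
proof -
  define Y where "Y = 2 * \<alpha> * (s \<bullet> d)"
  define W where "W = exp (\<alpha> * (norm s)^2)"
  have b0: "0 \<le> b" using d norm_ge_zero order_trans by blast
  have cs: "\<bar>s \<bullet> d\<bar> \<le> norm s * norm d" by (rule Cauchy_Schwarz_ineq2)
  have sdb: "norm s * norm d \<le> norm s * b" using d by (simp add: mult_left_mono)
  have "\<bar>Y\<bar> = 2 * \<alpha> * \<bar>s \<bullet> d\<bar>" unfolding Y_def using a by (simp add: abs_mult)
  also have "\<dots> \<le> 2 * \<alpha> * (norm s * b)" using cs sdb a by (simp add: mult_left_mono)
  also have "\<dots> \<le> 2 * \<alpha> * (K * b)" using s a b0 by (simp add: mult_left_mono mult_right_mono)
  also have "\<dots> \<le> 1" using ab by (simp add: mult.assoc)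
  finally have Y1: "\<bar>Y\<bar> \<le> 1" .
  have eY: "exp Y \<le> 1 + Y + Y^2" by (rule expb[OF Y1])
  have nn: "0 \<le> 1 + Y + Y^2" using Y1 zero_le_power2[of Y] by linarith
  have "Y^2 = 4 * \<alpha>^2 * (s \<bullet> d)^2" unfolding Y_def by (simp add: power_mult_distrib)
  also have "(s \<bullet> d)^2 \<le> (norm s * b)^2"
    using cs sdb by (metis abs_ge_zero power2_abs power_mono order_trans)
  then have "4 * \<alpha>^2 * (s \<bullet> d)^2 \<le> 4 * \<alpha>^2 * (norm s * b)^2" by (simp add: mult_left_mono)
  finally have Y2: "Y^2 \<le> 4 * \<alpha>^2 * b^2 * (norm s)^2" by (simp add: power_mult_distrib algebra_simps)
  have "1 + Y^2 \<le> exp (4 * \<alpha>^2 * b^2 * (norm s)^2)"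
    using Y2 exp_ge_add_one_self[of "4 * \<alpha>^2 * b^2 * (norm s)^2"] by linarith
  then have "W * (1 + Y^2) \<le> W * exp (4 * \<alpha>^2 * b^2 * (norm s)^2)" unfolding W_def by simp
  also have "\<dots> = exp ((\<alpha> + 4 * \<alpha>^2 * b^2) * (norm s)^2)" unfolding W_def
    by (simp add: exp_add[symmetric] algebra_simps)
  finally have WY: "W * (1 + Y + Y^2) \<le> exp ((\<alpha> + 4 * \<alpha>^2 * b^2) * (norm s)^2) + W * Y"
    by (simp add: algebra_simps)
  have ed: "exp (\<alpha> * (norm d)^2) \<le> exp (\<alpha> * b^2)"
    using d a by (simp add: mult_left_mono power_mono)
  have "exp (\<alpha> * (norm (s + d))^2) = W * exp Y * exp (\<alpha> * (norm d)^2)"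
    unfolding W_def Y_def norm_add_sq by (simp add: exp_add[symmetric] algebra_simps)
  also have "\<dots> \<le> W * (1 + Y + Y^2) * exp (\<alpha> * b^2)"
    using eY ed nn unfolding W_def by (intro mult_mono) auto
  also have "\<dots> \<le> (exp ((\<alpha> + 4 * \<alpha>^2 * b^2) * (norm s)^2) + W * Y) * exp (\<alpha> * b^2)"
    using WY by (simp add: mult_right_mono)
  finally show ?thesis unfolding W_def Y_def by (simp add: mult.commute)
qed


lemma arith1:
  fixes x N :: real
  assumes x: "0 \<le> x" and N: "0 \<le> N" and h: "8 * x * (N + 1) \<le> 1"
  shows "8 * (x + 4 * x^2) * N \<le> 1" "x + 2 * (x + 4 * x^2) * N \<le> 2 * x * (N + 1)" "2 * x * N \<le> 1"
proof -
  have xN: "0 \<le> x * N" using x N by simp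
  have a: "8 * (x * N) \<le> 1 - 8 * x" using h by (simp add: algebra_simps)
  have "x * (8 * (x * N)) \<le> x * (1 - 8 * x)" using a x by (rule mult_left_mono)
  then have b: "8 * (x^2 * N) \<le> x - 8 * x^2" by (simp add: algebra_simps power2_eq_square)
  have x2: "0 \<le> x^2" by simp
  have e1: "8 * (x + 4 * x^2) * N = 8 * (x * N) + 32 * (x^2 * N)" by (simp add: algebra_simps)
  have e2: "x + 2 * (x + 4 * x^2) * N = x + 2 * (x * N) + 8 * (x^2 * N)" by (simp add: algebra_simps)
  have e3: "2 * x * (N + 1) = 2 * (x * N) + 2 * x" by (simp add: algebra_simps)
  show "8 * (x + 4 * x^2) * N \<le> 1" unfolding e1 using a b x2 x by linarith
  show "x + 2 * (x + 4 * x^2) * N \<le> 2 * x * (N + 1)" unfolding e2 e3 using b x2 by linarith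
  show "2 * x * N \<le> 1" using a x xN by linarith
qed

locale L =
  fixes M :: "'a measure" and F :: "nat \<Rightarrow> 'a measure" and P :: "nat \<Rightarrow> 'a \<Rightarrow> real^'d^'d"
    and t :: nat and c :: real
  assumes ps: "prob_space M" and filt: "filtration (space M) F" and sub: "\<And>\<tau>. subalgebra M (F \<tau>)"
    and meas: "\<And>\<tau> i j. \<tau> \<in> {1..t} \<Longrightarrow> (\<lambda>\<omega>. P \<tau> \<omega> $ i $ j) \<in> borel_measurable (F \<tau>)"
    and cpos: "c > 0"
    and bnd: "\<And>\<tau> \<omega>. \<tau> \<in> {1..t} \<Longrightarrow> \<omega> \<in> space M \<Longrightarrow> norm (P \<tau> \<omega>) \<le> c"
begin

sublocale prob_space M by (rule ps)

definition C where "C \<tau> \<omega> = mat_cond_exp M (F (\<tau> - 1)) (P \<tau>) \<omega>"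
definition D where "D \<tau> \<omega> = P \<tau> \<omega> - C \<tau> \<omega>"
definition S where "S n \<omega> = (\<Sum>\<tau>\<in>{1..n}. D \<tau> \<omega>)"

lemma C_nth: "C \<tau> \<omega> $ i $ j = real_cond_exp M (F (\<tau> - 1)) (\<lambda>x. P \<tau> x $ i $ j) \<omega>"
  unfolding C_def mat_cond_exp_def by simp

lemma sfs: "sigma_finite_subalgebra M (F k)"
  by (rule finite_measure_subalgebra_is_sigma_finite)
     (simp add: finite_measure_subalgebra_def finite_measure_subalgebra_axioms_def sub finite_measure_axioms)

lemma sub_mono: "k \<le> l \<Longrightarrow> subalgebra (F l) (F k)"
  unfolding subalgebra_def using filtration.space_F[OF filt] filtration.sets_F_mono[OF filt] by auto

lemma measPF: "\<tau> \<in> {1..t} \<Longrightarrow> \<tau> \<le> k \<Longrightarrow> (\<lambda>\<omega>. P \<tau> \<omega> $ i $ j) \<in> borel_measurable (F k)"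
  by (rule measurable_from_subalg[OF sub_mono meas])

lemma measPM[measurable]: "\<tau> \<in> {1..t} \<Longrightarrow> (\<lambda>\<omega>. P \<tau> \<omega> $ i $ j) \<in> borel_measurable M"
  by (rule measurable_from_subalg[OF sub meas])

lemma measCF: "\<tau> - 1 \<le> k \<Longrightarrow> (\<lambda>\<omega>. C \<tau> \<omega> $ i $ j) \<in> borel_measurable (F k)"
  unfolding C_nth by (rule measurable_from_subalg[OF sub_mono borel_measurable_cond_exp])

lemma measCM[measurable]: "(\<lambda>\<omega>. C \<tau> \<omega> $ i $ j) \<in> borel_measurable M"
  unfolding C_nth by (rule borel_measurable_cond_exp2)

lemma measDF: "\<tau> \<in> {1..t} \<Longrightarrow> \<tau> \<le> k \<Longrightarrow> (\<lambda>\<omega>. D \<tau> \<omega> $ i $ j) \<in> borel_measurable (F k)"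
  unfolding D_def using measPF[of \<tau> k i j] measCF[of \<tau> k i j] by simp

lemma measSF: "n \<le> t \<Longrightarrow> n \<le> k \<Longrightarrow> (\<lambda>\<omega>. S n \<omega> $ i $ j) \<in> borel_measurable (F k)"
  unfolding S_def sum_component by (rule borel_measurable_sum, rule measDF) auto

lemma measSM: "n \<le> t \<Longrightarrow> (\<lambda>\<omega>. S n \<omega> $ i $ j) \<in> borel_measurable M"
  by (rule measurable_from_subalg[OF sub measSF[of n n]]) auto

lemma measDM: "\<tau> \<in> {1..t} \<Longrightarrow> (\<lambda>\<omega>. D \<tau> \<omega> $ i $ j) \<in> borel_measurable M"
  by (rule measurable_from_subalg[OF sub measDF[of \<tau> \<tau>]]) auto

lemma intP: "\<tau> \<in> {1..t} \<Longrightarrow> integrable M (\<lambda>\<omega>. P \<tau> \<omega> $ i $ j)"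
proof (rule integrable_const_bound[where B=c])
  assume "\<tau> \<in> {1..t}"
  then show "AE \<omega> in M. norm (P \<tau> \<omega> $ i $ j) \<le> c"
  proof (intro AE_I2)
    fix \<omega> assume "\<omega> \<in> space M"
    then have "norm (P \<tau> \<omega>) \<le> c" using bnd \<open>\<tau> \<in> {1..t}\<close> by blast
    then show "norm (P \<tau> \<omega> $ i $ j) \<le> c" using entry_le[of "P \<tau> \<omega>" i j] by simp
  qed
  show "(\<lambda>\<omega>. P \<tau> \<omega> $ i $ j) \<in> borel_measurable M" using \<open>\<tau> \<in> {1..t}\<close> by measurable
qed

lemma intP2: "\<tau> \<in> {1..t} \<Longrightarrow> integrable M (\<lambda>\<omega>. (P \<tau> \<omega> $ i $ j)^2)"
proof (rule integrable_const_bound[where B="c^2"])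
  assume "\<tau> \<in> {1..t}"
  then show "AE \<omega> in M. norm ((P \<tau> \<omega> $ i $ j)^2) \<le> c^2"
  proof (intro AE_I2)
    fix \<omega> assume "\<omega> \<in> space M"
    then have "\<bar>P \<tau> \<omega> $ i $ j\<bar> \<le> c" using bnd \<open>\<tau> \<in> {1..t}\<close>
      by (metis entry_le order_trans)
    then show "norm ((P \<tau> \<omega> $ i $ j)^2) \<le> c^2"
      by (simp add: sq_le)
  qed
  show "(\<lambda>\<omega>. (P \<tau> \<omega> $ i $ j)^2) \<in> borel_measurable M" using \<open>\<tau> \<in> {1..t}\<close> by measurable
qed

lemma normC:
  assumes tau: "\<tau> \<in> {1..t}"
  shows "AE \<omega> in M. norm (C \<tau> \<omega>) \<le> c"
proof -
  interpret sigma_finite_subalgebra M "F (\<tau> - 1)" by (rule sfs)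
  let ?E = "real_cond_exp M (F (\<tau> - 1))"
  have jen: "AE \<omega> in M. (C \<tau> \<omega> $ i $ j)^2 \<le> ?E (\<lambda>x. (P \<tau> x $ i $ j)^2) \<omega>" for i j
    unfolding C_nth
    by (rule real_cond_exp_jensens_inequality(2)[where I=UNIV])
       (auto simp: intP[OF tau] intP2[OF tau] convex_power2)
  have jen_all: "AE \<omega> in M. \<forall>i\<in>UNIV. \<forall>j\<in>UNIV. (C \<tau> \<omega> $ i $ j)^2 \<le> ?E (\<lambda>x. (P \<tau> x $ i $ j)^2) \<omega>"
    by (intro AE_finite_allI jen) auto
  have s1: "AE \<omega> in M. ?E (\<lambda>x. \<Sum>j\<in>UNIV. (P \<tau> x $ i $ j)^2) \<omega> = (\<Sum>j\<in>UNIV. ?E (\<lambda>x. (P \<tau> x $ i $ j)^2) \<omega>)" for i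
    by (rule real_cond_exp_sum) (simp add: intP2[OF tau])
  have s1_all: "AE \<omega> in M. \<forall>i\<in>UNIV. ?E (\<lambda>x. \<Sum>j\<in>UNIV. (P \<tau> x $ i $ j)^2) \<omega> = (\<Sum>j\<in>UNIV. ?E (\<lambda>x. (P \<tau> x $ i $ j)^2) \<omega>)"
    by (intro AE_finite_allI s1) auto
  have s2: "AE \<omega> in M. ?E (\<lambda>x. \<Sum>i\<in>UNIV. \<Sum>j\<in>UNIV. (P \<tau> x $ i $ j)^2) \<omega> = (\<Sum>i\<in>UNIV. ?E (\<lambda>x. \<Sum>j\<in>UNIV. (P \<tau> x $ i $ j)^2) \<omega>)"
    by (rule real_cond_exp_sum) (simp add: intP2[OF tau])
  have le: "AE \<omega> in M. ?E (\<lambda>x. \<Sum>i\<in>UNIV. \<Sum>j\<in>UNIV. (P \<tau> x $ i $ j)^2) \<omega> \<le> c^2"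
  proof (rule real_cond_exp_le_c)
    show "integrable M (\<lambda>x. \<Sum>i\<in>UNIV. \<Sum>j\<in>UNIV. (P \<tau> x $ i $ j)^2)"
      by (simp add: intP2[OF tau])
    show "AE x in M. (\<Sum>i\<in>UNIV. \<Sum>j\<in>UNIV. (P \<tau> x $ i $ j)^2) \<le> c^2"
    proof (rule AE_I2)
      fix x assume "x \<in> space M"
      then have "norm (P \<tau> x) \<le> c" using bnd tau by auto
      then have "(norm (P \<tau> x))^2 \<le> c^2" by (simp add: power_mono)
      then show "(\<Sum>i\<in>UNIV. \<Sum>j\<in>UNIV. (P \<tau> x $ i $ j)^2) \<le> c^2"
        by (simp add: norm_sq_mat)
    qed
  qed
  show ?thesis
  proof (rule AE_mp[OF AE_conjI[OF jen_all AE_conjI[OF s1_all AE_conjI[OF s2 le]]]], rule AE_I2, clarify)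
    fix \<omega> assume h1: "\<forall>i\<in>UNIV. \<forall>j\<in>UNIV. (C \<tau> \<omega> $ i $ j)^2 \<le> ?E (\<lambda>x. (P \<tau> x $ i $ j)^2) \<omega>"
      and h2: "\<forall>i\<in>UNIV. ?E (\<lambda>x. \<Sum>j\<in>UNIV. (P \<tau> x $ i $ j)^2) \<omega> = (\<Sum>j\<in>UNIV. ?E (\<lambda>x. (P \<tau> x $ i $ j)^2) \<omega>)"
      and h3: "?E (\<lambda>x. \<Sum>i\<in>UNIV. \<Sum>j\<in>UNIV. (P \<tau> x $ i $ j)^2) \<omega> = (\<Sum>i\<in>UNIV. ?E (\<lambda>x. \<Sum>j\<in>UNIV. (P \<tau> x $ i $ j)^2) \<omega>)"
      and h4: "?E (\<lambda>x. \<Sum>i\<in>UNIV. \<Sum>j\<in>UNIV. (P \<tau> x $ i $ j)^2) \<omega> \<le> c^2"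
    have "(norm (C \<tau> \<omega>))^2 = (\<Sum>i\<in>UNIV. \<Sum>j\<in>UNIV. (C \<tau> \<omega> $ i $ j)^2)"
      by (rule norm_sq_mat)
    also have "\<dots> \<le> (\<Sum>i\<in>UNIV. \<Sum>j\<in>UNIV. ?E (\<lambda>x. (P \<tau> x $ i $ j)^2) \<omega>)"
      using h1 by (intro sum_mono) auto
    also have "\<dots> = ?E (\<lambda>x. \<Sum>i\<in>UNIV. \<Sum>j\<in>UNIV. (P \<tau> x $ i $ j)^2) \<omega>"
      using h2 h3 by simp
    also have "\<dots> \<le> c^2" by (rule h4)
    finally show "norm (C \<tau> \<omega>) \<le> c"
      using cpos by (simp add: power2_le_iff_abs_le)
  qed
qed


lemma measSmatF: "n \<le> t \<Longrightarrow> n \<le> k \<Longrightarrow> S n \<in> borel_measurable (F k)"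
  by (rule mat_meas, rule measSF)

lemma measSmat[measurable]: "n \<le> t \<Longrightarrow> S n \<in> borel_measurable M"
  by (rule mat_meas, rule measSM)

lemma measDmat[measurable]: "\<tau> \<in> {1..t} \<Longrightarrow> D \<tau> \<in> borel_measurable M"
  by (rule mat_meas, rule measDM)

lemma normD: "\<tau> \<in> {1..t} \<Longrightarrow> AE \<omega> in M. norm (D \<tau> \<omega>) \<le> 2 * c"
proof -
  assume tau: "\<tau> \<in> {1..t}"
  show ?thesis
  proof (rule AE_mp[OF normC[OF tau]], rule AE_I2, rule impI)
    fix \<omega> assume "\<omega> \<in> space M" "norm (C \<tau> \<omega>) \<le> c"
    moreover have "norm (P \<tau> \<omega>) \<le> c" using bnd tau \<open>\<omega> \<in> space M\<close> by blast
    ultimately show "norm (D \<tau> \<omega>) \<le> 2 * c" unfolding D_def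
      using norm_triangle_ineq4[of "P \<tau> \<omega>" "C \<tau> \<omega>"] by linarith
  qed
qed

lemma normS: "AE \<omega> in M. \<forall>n\<in>{..t}. norm (S n \<omega>) \<le> real n * (2 * c)"
proof -
  have "AE \<omega> in M. \<forall>\<tau>\<in>{1..t}. norm (D \<tau> \<omega>) \<le> 2 * c"
    by (rule AE_finite_allI) (auto intro: normD)
  then show ?thesis
  proof (rule AE_mp, intro AE_I2 impI ballI)
    fix \<omega> n assume h: "\<forall>\<tau>\<in>{1..t}. norm (D \<tau> \<omega>) \<le> 2 * c" and n: "n \<in> {..t}"
    have "norm (S n \<omega>) \<le> (\<Sum>\<tau>\<in>{1..n}. norm (D \<tau> \<omega>))" unfolding S_def by (rule norm_sum)
    also have "\<dots> \<le> (\<Sum>\<tau>\<in>{1..n}. 2 * c)" using h n by (intro sum_mono) auto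
    finally show "norm (S n \<omega>) \<le> real n * (2 * c)" by simp
  qed
qed

lemma mart:
  assumes n: "n \<in> {1..t}" and g: "g \<in> borel_measurable (F (n - 1))" and gb: "AE \<omega> in M. \<bar>g \<omega>\<bar> \<le> K"
  shows "integrable M (\<lambda>\<omega>. g \<omega> * D n \<omega> $ i $ j)" "(\<integral>\<omega>. g \<omega> * D n \<omega> $ i $ j \<partial>M) = 0"
proof -
  interpret sigma_finite_subalgebra M "F (n - 1)" by (rule sfs)
  have gM[measurable]: "g \<in> borel_measurable M" by (rule measurable_from_subalg[OF sub g])
  have pm[measurable]: "(\<lambda>\<omega>. P n \<omega> $ i $ j) \<in> borel_measurable M" using n by (rule measPM)
  have iP: "integrable M (\<lambda>\<omega>. g \<omega> * P n \<omega> $ i $ j)"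
  proof (rule integrable_const_bound[where B="K * c"])
    show "AE \<omega> in M. norm (g \<omega> * P n \<omega> $ i $ j) \<le> K * c"
    proof (rule AE_mp[OF gb], intro AE_I2 impI)
      fix \<omega> assume w: "\<omega> \<in> space M" and gk: "\<bar>g \<omega>\<bar> \<le> K"
      have "\<bar>P n \<omega> $ i $ j\<bar> \<le> c" using bnd[OF n w] entry_le[of "P n \<omega>" i j] by linarith
      then show "norm (g \<omega> * P n \<omega> $ i $ j) \<le> K * c"
        using gk by (simp add: abs_mult mult_mono')
    qed
    show "(\<lambda>\<omega>. g \<omega> * P n \<omega> $ i $ j) \<in> borel_measurable M" by measurable
  qed
  have iC: "integrable M (\<lambda>\<omega>. g \<omega> * C n \<omega> $ i $ j)"
    unfolding C_nth by (rule real_cond_exp_intg(1)[OF iP g pm])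
  have eq: "(\<integral>\<omega>. g \<omega> * C n \<omega> $ i $ j \<partial>M) = (\<integral>\<omega>. g \<omega> * P n \<omega> $ i $ j \<partial>M)"
    unfolding C_nth by (rule real_cond_exp_intg(2)[OF iP g pm])
  have fe: "(\<lambda>\<omega>. g \<omega> * D n \<omega> $ i $ j) = (\<lambda>\<omega>. g \<omega> * P n \<omega> $ i $ j - g \<omega> * C n \<omega> $ i $ j)"
    unfolding D_def by (simp add: algebra_simps)
  show "integrable M (\<lambda>\<omega>. g \<omega> * D n \<omega> $ i $ j)" unfolding fe using iP iC by simp
  show "(\<integral>\<omega>. g \<omega> * D n \<omega> $ i $ j \<partial>M) = 0" unfolding fe using iP iC eq by simp
qed


lemma intE:
  assumes n: "n \<le> t" and a: "0 \<le> \<alpha>"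
  shows "integrable M (\<lambda>\<omega>. exp (\<alpha> * (norm (S n \<omega>))^2))"
proof (rule integrable_const_bound[where B="exp (\<alpha> * (real n * (2 * c))^2)"])
  have [measurable]: "S n \<in> borel_measurable M" using measSmat[OF n] .
  show "(\<lambda>\<omega>. exp (\<alpha> * (norm (S n \<omega>))^2)) \<in> borel_measurable M" by measurable
  show "AE \<omega> in M. norm (exp (\<alpha> * (norm (S n \<omega>))^2)) \<le> exp (\<alpha> * (real n * (2 * c))^2)"
  proof (rule AE_mp[OF normS], intro AE_I2 impI)
    fix \<omega> assume "\<forall>n\<in>{..t}. norm (S n \<omega>) \<le> real n * (2 * c)"
    then have "norm (S n \<omega>) \<le> real n * (2 * c)" using n by auto
    then have "(norm (S n \<omega>))^2 \<le> (real n * (2 * c))^2" by (simp add: power_mono)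
    then have "\<alpha> * (norm (S n \<omega>))^2 \<le> \<alpha> * (real n * (2 * c))^2" using a by (simp add: mult_left_mono)
    then show "norm (exp (\<alpha> * (norm (S n \<omega>))^2)) \<le> exp (\<alpha> * (real n * (2 * c))^2)" by simp
  qed
qed

lemma S_Suc: "S (Suc n) \<omega> = S n \<omega> + D (Suc n) \<omega>"
  unfolding S_def by (simp add: atLeastAtMostSuc_conv add.commute)

lemma mainind:
  "n \<le> t \<Longrightarrow> 0 \<le> \<alpha> \<Longrightarrow> 8 * (\<alpha> * (2 * c)^2) * real n \<le> 1 \<Longrightarrow>
    (\<integral>\<omega>. exp (\<alpha> * (norm (S n \<omega>))^2) \<partial>M) \<le> exp (2 * (\<alpha> * (2 * c)^2) * real n)"
proof (induction n arbitrary: \<alpha>)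
  case 0
  have "(\<integral>\<omega>. exp (\<alpha> * (norm (S 0 \<omega>))^2) \<partial>M) = 1" unfolding S_def by (simp add: prob_space)
  then show ?case by simp
next
  case (Suc n)
  define b where "b = 2 * c"
  have b0: "0 \<le> b" unfolding b_def using cpos by simp
  have nt: "n \<le> t" and mt: "Suc n \<in> {1..t}" using Suc.prems by auto
  have a: "0 \<le> \<alpha>" using Suc.prems by simp
  define x where "x = \<alpha> * b^2"
  define \<alpha>' where "\<alpha>' = \<alpha> + 4 * \<alpha>^2 * b^2"
  have x0: "0 \<le> x" unfolding x_def using a by simp
  have a'0: "0 \<le> \<alpha>'" unfolding \<alpha>'_def using a by simp
  have x': "\<alpha>' * b^2 = x + 4 * x^2" unfolding \<alpha>'_def x_def by (simp add: algebra_simps power2_eq_square)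
  have h: "8 * x * (real n + 1) \<le> 1" using Suc.prems(3) unfolding x_def b_def by (simp add: algebra_simps)
  note A = arith1[OF x0 _ h, simplified]
  have IH: "(\<integral>\<omega>. exp (\<alpha>' * (norm (S n \<omega>))^2) \<partial>M) \<le> exp (2 * (x + 4 * x^2) * real n)"
  proof -
    have k: "\<alpha>' * (2 * c)^2 = x + 4 * x^2" using x' unfolding b_def .
    have "8 * (\<alpha>' * (2 * c)^2) * real n \<le> 1" unfolding k using A(1) by (simp add: algebra_simps)
    from Suc.IH[OF nt a'0 this] show ?thesis unfolding k .
  qed
  define G where "G \<omega> = exp (\<alpha> * (norm (S n \<omega>))^2) * (2 * \<alpha> * (S n \<omega> \<bullet> D (Suc n) \<omega>))" for \<omega>
  define g where "g i j \<omega> = 2 * \<alpha> * exp (\<alpha> * (norm (S n \<omega>))^2) * S n \<omega> $ i $ j" for i j \<omega>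
  have Gsum: "G \<omega> = (\<Sum>i\<in>UNIV. \<Sum>j\<in>UNIV. g i j \<omega> * D (Suc n) \<omega> $ i $ j)" for \<omega>
    unfolding G_def g_def inner_mat by (simp add: sum_distrib_left algebra_simps)
  have gmeas: "g i j \<in> borel_measurable (F (Suc n - 1))" for i j
  proof -
    have m1: "S n \<in> borel_measurable (F n)" using measSmatF[OF nt order_refl] .
    have m2: "(\<lambda>x. S n x $ i $ j) \<in> borel_measurable (F n)" using measSF[OF nt order_refl] .
    have m3: "(\<lambda>x. norm (S n x)) \<in> borel_measurable (F n)" using measurable_compose[OF m1 borel_measurable_norm] by (simp add: comp_def)
    show ?thesis unfolding g_def using m2 m3
      by (simp add: borel_measurable_times borel_measurable_exp borel_measurable_power)
  qed
  have gbnd: "AE \<omega> in M. \<bar>g i j \<omega>\<bar> \<le> 2 * \<alpha> * exp (\<alpha> * (real n * b)^2) * (real n * b)" for i j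
  proof (rule AE_mp[OF normS], intro AE_I2 impI)
    fix \<omega> assume "\<forall>n\<in>{..t}. norm (S n \<omega>) \<le> real n * (2 * c)"
    then have sn: "norm (S n \<omega>) \<le> real n * b" using nt unfolding b_def by auto
    then have "(norm (S n \<omega>))^2 \<le> (real n * b)^2" by (simp add: power_mono)
    then have "\<alpha> * (norm (S n \<omega>))^2 \<le> \<alpha> * (real n * b)^2" using a by (simp add: mult_left_mono)
    then have e: "exp (\<alpha> * (norm (S n \<omega>))^2) \<le> exp (\<alpha> * (real n * b)^2)" by simp
    have en: "\<bar>S n \<omega> $ i $ j\<bar> \<le> real n * b" using entry_le[of "S n \<omega>" i j] sn by linarith
    have "\<bar>g i j \<omega>\<bar> = 2 * \<alpha> * exp (\<alpha> * (norm (S n \<omega>))^2) * \<bar>S n \<omega> $ i $ j\<bar>"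
      unfolding g_def using a by (simp add: abs_mult)
    also have "\<dots> \<le> 2 * \<alpha> * exp (\<alpha> * (real n * b)^2) * (real n * b)"
      using e en a by (intro mult_mono) auto
    finally show "\<bar>g i j \<omega>\<bar> \<le> 2 * \<alpha> * exp (\<alpha> * (real n * b)^2) * (real n * b)" .
  qed
  have ig: "integrable M (\<lambda>\<omega>. g i j \<omega> * D (Suc n) \<omega> $ i $ j)" for i j
    using mart(1)[OF mt gmeas gbnd] .
  have ig0: "(\<integral>\<omega>. g i j \<omega> * D (Suc n) \<omega> $ i $ j \<partial>M) = 0" for i j
    using mart(2)[OF mt gmeas gbnd] .
  have iG: "integrable M G"
    unfolding Gsum using ig by simp
  have intG: "(\<integral>\<omega>. G \<omega> \<partial>M) = 0"
  proof -
    have "(\<integral>\<omega>. G \<omega> \<partial>M) = (\<Sum>i\<in>UNIV. \<Sum>j\<in>UNIV. \<integral>\<omega>. g i j \<omega> * D (Suc n) \<omega> $ i $ j \<partial>M)"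
      unfolding Gsum
      using ig by (simp add: integral_sum)
    also have "\<dots> = 0" by (simp add: ig0)
    finally show ?thesis .
  qed
  have pt: "AE \<omega> in M. exp (\<alpha> * (norm (S (Suc n) \<omega>))^2) \<le> exp (\<alpha> * b^2) * (exp (\<alpha>' * (norm (S n \<omega>))^2) + G \<omega>)"
  proof (rule AE_mp[OF AE_conjI[OF normS normD[OF mt]]], intro AE_I2 impI)
    fix \<omega> assume hh: "(\<forall>n\<in>{..t}. norm (S n \<omega>) \<le> real n * (2 * c)) \<and> norm (D (Suc n) \<omega>) \<le> 2 * c"
    then have sn: "norm (S n \<omega>) \<le> real n * b" and dn: "norm (D (Suc n) \<omega>) \<le> b"
      using nt unfolding b_def by auto
    have "2 * \<alpha> * (real n * b) * b = 2 * x * real n" unfolding x_def by (simp add: power2_eq_square algebra_simps)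
    then have ab: "2 * \<alpha> * (real n * b) * b \<le> 1" using A(3) by linarith
    show "exp (\<alpha> * (norm (S (Suc n) \<omega>))^2) \<le> exp (\<alpha> * b^2) * (exp (\<alpha>' * (norm (S n \<omega>))^2) + G \<omega>)"
      unfolding S_Suc G_def \<alpha>'_def by (rule step_pt[OF a sn dn ab])
  qed
  have "(\<integral>\<omega>. exp (\<alpha> * (norm (S (Suc n) \<omega>))^2) \<partial>M) \<le> (\<integral>\<omega>. exp (\<alpha> * b^2) * (exp (\<alpha>' * (norm (S n \<omega>))^2) + G \<omega>) \<partial>M)"
    using pt intE[OF Suc.prems(1) a] intE[OF nt a'0] iG by (intro integral_mono_AE) auto
  also have "\<dots> = exp (\<alpha> * b^2) * (\<integral>\<omega>. exp (\<alpha>' * (norm (S n \<omega>))^2) \<partial>M)"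
    using intE[OF nt a'0] iG intG by simp
  also have "\<dots> \<le> exp x * exp (2 * (x + 4 * x^2) * real n)"
    using IH unfolding x_def by simp
  also have "\<dots> = exp (x + 2 * (x + 4 * x^2) * real n)" by (simp add: exp_add[symmetric])
  also have "\<dots> \<le> exp (2 * x * (real n + 1))" using A(2) by simp
  finally show ?case unfolding x_def b_def by (simp add: algebra_simps)
qed

end

lemma sym_iff: "transpose (X::'b::semiring_1^'n^'n) = X \<longleftrightarrow> (\<forall>i j. X$i$j = X$j$i)"
  by (auto simp: transpose_def vec_eq_iff)

lemma qf_sum:
  fixes X :: "'i \<Rightarrow> real^'n^'n"
  shows "v \<bullet> ((\<Sum>\<tau>\<in>I. X \<tau>) *v v) = (\<Sum>\<tau>\<in>I. v \<bullet> (X \<tau> *v v))"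
proof (induction I rule: infinite_finite_induct)
  case (infinite A) then show ?case by simp
next
  case empty then show ?case by (simp add: matrix_vector_mult_def inner_vec_def)
next
  case (insert x F) then show ?case by (simp add: matrix_vector_mult_add_rdistrib inner_add_right)
qed

theorem lemma3:
  fixes M :: "'a measure"
    and F :: "nat \<Rightarrow> 'a measure"
    and P :: "nat \<Rightarrow> 'a \<Rightarrow> real^'d^'d"
    and t :: nat and c \<phi> \<delta> lam :: real
  assumes "prob_space M"
    and "filtration (space M) F"
    and "\<And>\<tau>. subalgebra M (F \<tau>)"
    and "t \<ge> 1"
    and "\<And>\<tau> i j. \<tau> \<in> {1..t} \<Longrightarrow> (\<lambda>\<omega>. P \<tau> \<omega> $ i $ j) \<in> borel_measurable (F \<tau>)"
    and "\<And>\<tau> \<omega>. \<tau> \<in> {1..t} \<Longrightarrow> \<omega> \<in> space M \<Longrightarrow> transpose (P \<tau> \<omega>) = P \<tau> \<omega>"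
    and "c > 0"
    and "\<And>\<tau> \<omega>. \<tau> \<in> {1..t} \<Longrightarrow> \<omega> \<in> space M \<Longrightarrow> frob_norm (P \<tau> \<omega>) \<le> c"
    and "\<phi>\<^sup>2 > 0"
    and "\<And>\<tau>. \<tau> \<in> {1..t} \<Longrightarrow>
           AE \<omega> in M. lambda_min (mat_cond_exp M (F (\<tau> - 1)) (P \<tau>) \<omega>) \<ge> \<phi>\<^sup>2"
    and "0 < \<delta>" and "\<delta> < 1"
    and "lam \<ge> 4 * sqrt 2 * c * sqrt (real t) * sqrt (ln (4 * (real t)\<^sup>2 / \<delta>))"
  shows "measure M {\<omega> \<in> space M.
            lambda_min ((\<Sum>\<tau>\<in>{1..t}. P \<tau> \<omega>) + lam *\<^sub>R mat 1) \<ge> \<phi>\<^sup>2 * real t}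
         \<ge> 1 - \<delta> / (real t)\<^sup>2"
proof -
  note ps = assms(1) and filt = assms(2) and sub = assms(3) and t1 = assms(4) and meas = assms(5)
    and symP = assms(6) and cpos = assms(7) and frob = assms(8) and phi = assms(9) and lmin = assms(10)
    and d0 = assms(11) and d1 = assms(12) and lamb = assms(13)
  have bnd': "norm (P \<tau> \<omega>) \<le> c" if "\<tau> \<in> {1..t}" "\<omega> \<in> space M" for \<tau> \<omega>
    using frob[OF that] unfolding frob_norm_eq .
  interpret L M F P t c by (rule L.intro[OF ps filt sub meas cpos bnd'])
  define A where "A \<omega> = (\<Sum>\<tau>\<in>{1..t}. P \<tau> \<omega>) + lam *\<^sub>R mat 1" for \<omega>
  define r where "r = \<phi>\<^sup>2 * real t"
  define K where "K = {X::real^'d^'d. \<forall>v. r * (v \<bullet> v) \<le> v \<bullet> (X *v v)}"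
  define T where "T = {\<omega> \<in> space M. r \<le> lambda_min (A \<omega>)}"
  define L where "L = ln (4 * (real t)\<^sup>2 / \<delta>)"
  have tpos: "0 < real t" using t1 by simp
  have q1: "1 < 4 * (real t)\<^sup>2 / \<delta>"
  proof -
    have "1 \<le> (real t)^2" using t1 by simp
    then have "\<delta> < 4 * (real t)^2" using d1 by linarith
    then show ?thesis using d0 by simp
  qed
  have L0: "0 < L" unfolding L_def using q1 by simp
  have rhs0: "0 \<le> 4 * sqrt 2 * c * sqrt (real t) * sqrt L" using cpos tpos L0 by simp
  have lamb': "4 * sqrt 2 * c * sqrt (real t) * sqrt L \<le> lam" using lamb unfolding L_def .
  have lam0: "0 \<le> lam" using rhs0 lamb' by linarith
  have lam2: "32 * c^2 * real t * L \<le> lam^2"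
  proof -
    have "(4 * sqrt 2 * c * sqrt (real t) * sqrt L)^2 \<le> lam^2"
      using lamb' rhs0 by (rule power_mono)
    moreover have "(4 * sqrt 2 * c * sqrt (real t) * sqrt L)^2 = 32 * c^2 * real t * L"
      using tpos L0 by (simp add: power_mult_distrib)
    ultimately show ?thesis by simp
  qed
  have symA: "transpose (A \<omega>) = A \<omega>" if "\<omega> \<in> space M" for \<omega>
  proof -
    have "P \<tau> \<omega> $ i $ j = P \<tau> \<omega> $ j $ i" if "\<tau> \<in> {1..t}" for \<tau> i j
      using symP[OF that \<open>\<omega> \<in> space M\<close>] unfolding sym_iff by blast
    then show ?thesis unfolding sym_iff A_def by (auto simp: mat_def intro!: sum.cong)
  qed
  have Ameas: "A \<in> borel_measurable M"
  proof (rule mat_meas)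
    fix i j
    have "(\<lambda>\<omega>. A \<omega> $ i $ j) = (\<lambda>\<omega>. (\<Sum>\<tau>\<in>{1..t}. P \<tau> \<omega> $ i $ j) + lam * mat 1 $ i $ j)"
      unfolding A_def by simp
    moreover have "(\<lambda>\<omega>. (\<Sum>\<tau>\<in>{1..t}. P \<tau> \<omega> $ i $ j) + lam * mat 1 $ i $ j) \<in> borel_measurable M"
      by (intro borel_measurable_add borel_measurable_sum measPM borel_measurable_const) auto
    ultimately show "(\<lambda>\<omega>. A \<omega> $ i $ j) \<in> borel_measurable M" by simp
  qed
  have TK: "T = A -` K \<inter> space M"
    unfolding T_def K_def using lambda_min_char[OF symA] by auto
  have Tmeas: "T \<in> sets M"
    unfolding TK K_def by (rule measurable_sets[OF Ameas borel_closed[OF closed_psd]])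
  define \<alpha> where "\<alpha> = 1 / (8 * (2 * c)^2 * real t)"
  have a0: "0 < \<alpha>" unfolding \<alpha>_def using cpos tpos by simp
  have a1: "8 * (\<alpha> * (2 * c)^2) * real t = 1" unfolding \<alpha>_def using cpos tpos by simp
  have Ebound: "(\<integral>\<omega>. exp (\<alpha> * (norm (S t \<omega>))^2) \<partial>M) \<le> exp (1/4)"
  proof -
    have "(\<integral>\<omega>. exp (\<alpha> * (norm (S t \<omega>))^2) \<partial>M) \<le> exp (2 * (\<alpha> * (2 * c)^2) * real t)"
      using mainind[of t \<alpha>] a0 a1 by simp
    also have "2 * (\<alpha> * (2 * c)^2) * real t = 1/4" using a1 by simp
    finally show ?thesis .
  qed
  define Bad where "Bad = {\<omega> \<in> space M. exp (\<alpha> * lam^2) \<le> exp (\<alpha> * (norm (S t \<omega>))^2)}"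
  have [measurable]: "S t \<in> borel_measurable M" using measSmat by simp
  have Bad_meas: "Bad \<in> sets M" unfolding Bad_def by measurable
  have Markov: "measure M Bad \<le> (\<integral>\<omega>. exp (\<alpha> * (norm (S t \<omega>))^2) \<partial>M) / exp (\<alpha> * lam^2)"
    unfolding Bad_def
    by (rule integral_Markov_inequality_measure[OF intE[OF order_refl less_imp_le[OF a0]] sets.top]) auto
  have aL: "L \<le> \<alpha> * lam^2"
  proof -
    have "\<alpha> * lam^2 = lam^2 / (32 * c^2 * real t)" unfolding \<alpha>_def by (simp add: power_mult_distrib)
    moreover have "L \<le> lam^2 / (32 * c^2 * real t)" using lam2 cpos tpos
      by (simp add: pos_le_divide_eq mult.commute mult.left_commute)
    ultimately show ?thesis by simp
  qed
  have eL: "4 * (real t)\<^sup>2 / \<delta> \<le> exp (\<alpha> * lam^2)"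
  proof -
    have "exp L = 4 * (real t)\<^sup>2 / \<delta>" unfolding L_def using q1 by simp
    then show ?thesis using aL by (metis exp_le_cancel_iff)
  qed
  have e4: "exp (1/4::real) \<le> 4"
  proof -
    have "exp (1/4::real) \<le> 1 + 1/4 + (1/4)^2" by (rule exp_bound) auto
    moreover have "1 + 1/4 + (1/4::real)^2 \<le> 4" by (simp add: power2_eq_square)
    ultimately show ?thesis by linarith
  qed
  have Bad_le: "measure M Bad \<le> \<delta> / (real t)\<^sup>2"
  proof -
    have pos: "0 < 4 * (real t)\<^sup>2 / \<delta>" using q1 by simp
    have "measure M Bad \<le> exp (1/4) / exp (\<alpha> * lam^2)"
      using Markov Ebound by (meson divide_right_mono exp_ge_zero order_trans)
    also have "\<dots> \<le> exp (1/4) / (4 * (real t)\<^sup>2 / \<delta>)"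
    proof (rule divide_left_mono[OF eL])
      show "0 \<le> exp (1/4::real)" by simp
      show "0 < exp (\<alpha> * lam^2) * (4 * (real t)\<^sup>2 / \<delta>)" using pos by (rule mult_pos_pos[OF exp_gt_zero])
    qed
    also have "\<dots> \<le> 4 / (4 * (real t)\<^sup>2 / \<delta>)"
      using e4 pos by (intro divide_right_mono) auto
    also have "\<dots> = \<delta> / (real t)\<^sup>2" using d0 tpos by simp
    finally show ?thesis .
  qed
  have aeC: "AE \<omega> in M. \<forall>\<tau>\<in>{1..t}. \<forall>v. \<phi>\<^sup>2 * (v \<bullet> v) \<le> v \<bullet> (C \<tau> \<omega> *v v)"
  proof (rule AE_finite_allI, simp)
    fix \<tau> assume tau: "\<tau> \<in> {1..t}"
    interpret sigma_finite_subalgebra M "F (\<tau> - 1)" by (rule sfs)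
    have "AE \<omega> in M. real_cond_exp M (F (\<tau> - 1)) (\<lambda>x. P \<tau> x $ i $ j) \<omega> = real_cond_exp M (F (\<tau> - 1)) (\<lambda>x. P \<tau> x $ j $ i) \<omega>" for i j
    proof (rule real_cond_exp_cong)
      show "AE x in M. P \<tau> x $ i $ j = P \<tau> x $ j $ i"
        using symP[OF tau] unfolding sym_iff by (intro AE_I2) blast
    qed (use tau in \<open>simp_all add: measPM\<close>)
    then have "AE \<omega> in M. \<forall>i\<in>UNIV. \<forall>j\<in>UNIV. C \<tau> \<omega> $ i $ j = C \<tau> \<omega> $ j $ i"
      unfolding C_nth by (intro AE_finite_allI) auto
    then have symC: "AE \<omega> in M. transpose (C \<tau> \<omega>) = C \<tau> \<omega>"
      unfolding sym_iff by simp
    show "AE \<omega> in M. \<forall>v. \<phi>\<^sup>2 * (v \<bullet> v) \<le> v \<bullet> (C \<tau> \<omega> *v v)"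
    proof (rule AE_mp[OF AE_conjI[OF symC lmin[OF tau]]], intro AE_I2 impI)
      fix \<omega> assume h: "transpose (C \<tau> \<omega>) = C \<tau> \<omega> \<and> \<phi>\<^sup>2 \<le> lambda_min (mat_cond_exp M (F (\<tau> - 1)) (P \<tau>) \<omega>)"
      then show "\<forall>v. \<phi>\<^sup>2 * (v \<bullet> v) \<le> v \<bullet> (C \<tau> \<omega> *v v)"
        using lambda_min_char[of "C \<tau> \<omega>" "\<phi>\<^sup>2"] unfolding C_def by auto
    qed
  qed
  have aeT: "AE \<omega> in M. \<omega> \<in> space M - Bad \<longrightarrow> \<omega> \<in> T"
  proof (rule AE_mp[OF aeC], intro AE_I2 impI)
    fix \<omega> assume w: "\<omega> \<in> space M" and hC: "\<forall>\<tau>\<in>{1..t}. \<forall>v. \<phi>\<^sup>2 * (v \<bullet> v) \<le> v \<bullet> (C \<tau> \<omega> *v v)"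
      and g: "\<omega> \<in> space M - Bad"
    have "\<not> exp (\<alpha> * lam^2) \<le> exp (\<alpha> * (norm (S t \<omega>))^2)" using g w unfolding Bad_def by auto
    then have "\<alpha> * (norm (S t \<omega>))^2 < \<alpha> * lam^2" by simp
    then have "(norm (S t \<omega>))^2 < lam^2" using a0 by simp
    then have Sl: "norm (S t \<omega>) \<le> lam" using lam0 by (meson less_imp_le power2_less_imp_less)
    have "\<forall>v. r * (v \<bullet> v) \<le> v \<bullet> (A \<omega> *v v)"
    proof
      fix v :: "real^'d"
      have sumP: "(\<Sum>\<tau>\<in>{1..t}. P \<tau> \<omega>) = (\<Sum>\<tau>\<in>{1..t}. C \<tau> \<omega>) + S t \<omega>"
        unfolding S_def D_def by (simp add: sum.distrib[symmetric])
      have "v \<bullet> (A \<omega> *v v) = (\<Sum>\<tau>\<in>{1..t}. v \<bullet> (C \<tau> \<omega> *v v)) + v \<bullet> (S t \<omega> *v v) + lam * (v \<bullet> v)"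
        unfolding A_def sumP
        by (simp add: matrix_vector_mult_add_rdistrib inner_add_right qf_sum scaleR_matrix_vector_assoc[symmetric])
      moreover have "real t * (\<phi>\<^sup>2 * (v \<bullet> v)) \<le> (\<Sum>\<tau>\<in>{1..t}. v \<bullet> (C \<tau> \<omega> *v v))"
      proof -
        have "(\<Sum>\<tau>\<in>{1..t}. \<phi>\<^sup>2 * (v \<bullet> v)) \<le> (\<Sum>\<tau>\<in>{1..t}. v \<bullet> (C \<tau> \<omega> *v v))"
          using hC by (intro sum_mono) auto
        then show ?thesis by simp
      qed
      moreover have "- (norm (S t \<omega>) * (v \<bullet> v)) \<le> v \<bullet> (S t \<omega> *v v)"
        using quad_le[of v "S t \<omega>"] by linarith
      moreover have "norm (S t \<omega>) * (v \<bullet> v) \<le> lam * (v \<bullet> v)"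
        using Sl by (simp add: mult_right_mono)
      moreover have "r * (v \<bullet> v) = real t * (\<phi>\<^sup>2 * (v \<bullet> v))" unfolding r_def by (simp add: algebra_simps)
      ultimately show "r * (v \<bullet> v) \<le> v \<bullet> (A \<omega> *v v)" by linarith
    qed
    then show "\<omega> \<in> T" unfolding T_def using lambda_min_char[OF symA[OF w]] w by auto
  qed
  have "measure M (space M - Bad) \<le> measure M T"
    by (rule finite_measure_mono_AE[OF aeT Tmeas])
  moreover have "measure M (space M - Bad) = 1 - measure M Bad"
    using prob_compl[OF Bad_meas] by simp
  ultimately have "1 - \<delta> / (real t)\<^sup>2 \<le> measure M T" using Bad_le by linarith
  then show ?thesis unfolding T_def A_def r_def .
qed

end
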